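(* Let $A$ be a nonzero commutative nilpotent $\mathbb{F}_p$-algebra of finite dimension with $A^e\ne0$, $A^{e+1}=0$, let $t_r=\dim_{\mathbb{F}_p}(N_r/N_{r-1})$ for $1\le r\le e$, and let $t_M=\max_r t_r$. Then the number of ideals of $A$ is at least $p^{\lfloor t_M^2/4\rfloor}$.
   Context: Algebras are commutative, associative, not necessarily unital. $N_k=\{a\in A: x_1\cdots x_k a=0\ \forall x_1,\dots,x_k\in A\}$, $N_0=0$. *)

theory Defs
  imports Complex_Main "HOL-Computational_Algebra.Primes"
begin

fun nprod :: "'a::comm_ring list \<Rightarrow> 'a \<Rightarrow> 'a" where
  "nprod [] a = a"
| "nprod (x # xs) a = x * nprod xs a"

text \<open>N_k = {a. x1 ... xk a = 0 for all x1..xk}; in particular N_0 = {0}.\<close>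
definition annN :: "nat \<Rightarrow> 'a::comm_ring set" where
  "annN k = {a. \<forall>xs. length xs = k \<longrightarrow> nprod xs a = 0}"

definition alg_pow :: "('k::field \<Rightarrow> 'a::comm_ring \<Rightarrow> 'a) \<Rightarrow> nat \<Rightarrow> 'a set" where
  "alg_pow scale k = module.span scale {nprod xs a | xs a. Suc (length xs) = k}"

definition comm_algebra :: "('k::field \<Rightarrow> 'a::comm_ring \<Rightarrow> 'a) \<Rightarrow> bool" where
  "comm_algebra scale \<longleftrightarrow> vector_space scale \<and>
     (\<forall>c x y. scale c (x * y) = scale c x * y)"

definition alg_ideal :: "('k::field \<Rightarrow> 'a::comm_ring \<Rightarrow> 'a) \<Rightarrow> 'a set \<Rightarrow> bool" where
  "alg_ideal scale I \<longleftrightarrow> module.subspace scale I \<and> (\<forall>a x. x \<in> I \<longrightarrow> a * x \<in> I)"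

definition quot_dim :: "('k::field \<Rightarrow> 'a::comm_ring \<Rightarrow> 'a) \<Rightarrow> 'a set \<Rightarrow> 'a set \<Rightarrow> nat" where
  "quot_dim scale U W = vector_space.dim scale U - vector_space.dim scale W"

end

theory Submission imports Defs "HOL-Library.FuncSet" begin

lemma nprod_append: "nprod (xs @ ys) a = nprod xs (nprod ys a)"
  by (induction xs) auto

lemma nprod_zero: "nprod xs 0 = 0"
  by (induction xs) auto

lemma nprod_add: "nprod xs (a + b) = nprod xs a + nprod xs b"
  by (induction xs) (auto simp: distrib_left)

lemma nprod_scale:
  assumes "comm_algebra scale"
  shows "nprod xs (scale c a) = scale c (nprod xs a)"
proof (induction xs)
  case (Cons x xs)
  have h: "\<forall>c x y. scale c (x * y) = scale c x * y" using assms comm_algebra_def by blast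
  have "x * scale c (nprod xs a) = scale c (nprod xs a) * x" by (simp add: mult.commute)
  also have "\<dots> = scale c (nprod xs a * x)" using h by metis
  also have "\<dots> = scale c (x * nprod xs a)" by (simp add: mult.commute)
  finally show ?case using Cons by simp
qed simp

lemma annN_subspace:
  assumes "comm_algebra scale"
  shows "module.subspace scale (annN r)"
proof -
  interpret vs: vector_space scale using assms comm_algebra_def by blast
  show ?thesis unfolding vs.subspace_def annN_def
    by (auto simp: nprod_zero nprod_add nprod_scale[OF assms])
qed

lemma annN_mono: assumes r: "1 \<le> r" shows "annN (r - 1) \<subseteq> annN r"
proof
  fix a :: 'a assume "a \<in> annN (r - 1)"
  then have h: "\<And>xs. length xs = r - 1 \<Longrightarrow> nprod xs a = 0" unfolding annN_def by auto
  show "a \<in> annN r" unfolding annN_def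
  proof (intro CollectI allI impI)
    fix xs :: "'a list" assume l: "length xs = r"
    obtain y ys where "xs = y # ys" using l r by (cases xs) auto
    moreover have "nprod ys a = 0" using h l \<open>xs = y # ys\<close> by auto
    ultimately show "nprod xs a = 0" by simp
  qed
qed

lemma annN_mult: assumes r: "1 \<le> r" and x: "x \<in> annN r" shows "b * x \<in> annN (r - 1)"
  unfolding annN_def
proof safe
  fix ys :: "'a list"
  have h: "\<forall>xs. length xs = r \<longrightarrow> nprod xs x = 0" using x unfolding annN_def by simp
  assume l: "length ys = r - 1"
  have "nprod ys (b * x) = nprod (ys @ [b]) x" by (simp add: nprod_append)
  also have "\<dots> = 0" using h l r by auto
  finally show "nprod ys (b * x) = 0" .
qed

lemma div4: "((t::nat) div 2) * (t - t div 2) = t^2 div 4"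
proof (cases "even t")
  case True then obtain s where "t = 2*s" by blast
  then show ?thesis by (simp add: power2_eq_square)
next
  case False then obtain s where t: "t = 2*s+1" using oddE by blast
  have "t^2 = 4*(s*s+s) + 1" unfolding t by (simp add: power2_eq_square algebra_simps)
  then have "t^2 div 4 = s*s+s" by simp
  moreover have "t div 2 = s" "t - t div 2 = s + 1" using t by auto
  ultimately show ?thesis by (simp add: algebra_simps)
qed

lemma finite_space:
  fixes scale :: "'k::field \<Rightarrow> 'a::ab_group_add \<Rightarrow> 'a"
  assumes vs: "vector_space scale" and fK: "finite (UNIV :: 'k::field set)"
    and B: "finite B" "module.span scale B = (UNIV :: 'a::ab_group_add set)"
  shows "finite (UNIV :: 'a set)"
proof -
  interpret vs: vector_space scale by (rule vs)
  let ?f = "\<lambda>u. \<Sum>v\<in>B. scale (u v) v"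
  have "UNIV = range ?f" using vs.span_finite[OF B(1)] B(2) by simp
  also have "\<dots> \<subseteq> ?f ` (PiE B (\<lambda>_. UNIV :: 'k set))"
  proof
    fix y assume "y \<in> range ?f"
    then obtain u where y: "y = ?f u" by auto
    have "y = ?f (restrict u B)" unfolding y by (intro sum.cong) (auto simp: restrict_def)
    moreover have "restrict u B \<in> PiE B (\<lambda>_. UNIV :: 'k set)" by simp
    ultimately show "y \<in> ?f ` (PiE B (\<lambda>_. UNIV :: 'k set))" by (rule image_eqI)
  qed
  finally have sub: "UNIV \<subseteq> ?f ` (PiE B (\<lambda>_. UNIV :: 'k set))" by simp
  have fin: "finite (?f ` (PiE B (\<lambda>_. UNIV :: 'k set)))"
    by (intro finite_imageI finite_PiE B(1)) (simp add: fK)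
  show ?thesis by (rule finite_subset[OF sub fin])
qed

lemma many_ideals:
  fixes scale :: "'k::field \<Rightarrow> 'a::comm_ring \<Rightarrow> 'a"
  assumes vs: "vector_space scale"
    and fK: "card (UNIV::'k set) = p"
    and fA: "finite (UNIV::'a set)"
    and V: "module.subspace scale V" and WV: "W \<subseteq> V"
    and mul: "\<And>a x. x \<in> V \<Longrightarrow> a * x \<in> W"
  shows "p ^ ((vector_space.dim scale V - vector_space.dim scale W)\<^sup>2 div 4) \<le> card {I. alg_ideal scale I}"
proof -
  interpret vs: vector_space scale by (rule vs)
  obtain Bw where Bw: "Bw \<subseteq> W" "vs.independent Bw" "W \<subseteq> vs.span Bw" "card Bw = vs.dim W"
    by (rule vs.basis_exists)
  obtain B where B: "Bw \<subseteq> B" "B \<subseteq> V" "vs.independent B" "V \<subseteq> vs.span B"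
    by (rule vs.maximal_independent_subset_extend[of Bw V]) (use Bw WV in auto)
  have cB: "card B = vs.dim V" by (rule vs.basis_card_eq_dim) (use B in auto)
  have finB: "finite B" by (rule finite_subset[OF subset_UNIV fA])
  define D where "D = B - Bw"
  define t where "t = vs.dim V - vs.dim W"
  have cD: "card D = t" unfolding D_def t_def
    using card_Diff_subset[OF finite_subset[OF B(1) finB] B(1)] cB Bw(4) by simp
  have finD: "finite D" using finB D_def by auto
  obtain U where U: "U \<subseteq> D" "card U = t div 2"
    using obtain_subset_with_card_n[of "t div 2" D] cD by auto
  have finU: "finite U" using U finD finite_subset by blast
  define Y where "Y = D - U"
  have finY: "finite Y" using finD Y_def by auto
  have cY: "card Y = t - t div 2" unfolding Y_def
    using card_Diff_subset[OF finU U(1)] U cD by simp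
  define R where "R = vs.representation B"
  define I where "I c = {x \<in> V. \<forall>v\<in>Y. R x v = (\<Sum>u\<in>U. c u v * R x u)}" for c :: "'a \<Rightarrow> 'a \<Rightarrow> 'k"
  have spanV: "x \<in> V \<Longrightarrow> x \<in> vs.span B" for x using B(4) by auto
  have R0: "R x b = 0" if x: "x \<in> W" and b: "b \<in> D" for x b
  proof -
    have "R x = vs.representation Bw x" unfolding R_def
      by (rule vs.representation_extend[OF B(3)]) (use x Bw B in auto)
    then show "R x b = 0" using vs.representation_ne_zero[of Bw x b] b D_def by auto
  qed
  have ideal: "alg_ideal scale (I c)" for c
    unfolding alg_ideal_def vs.subspace_def
  proof (intro conjI allI impI ballI)
    show "0 \<in> I c" unfolding I_def R_def using vs.subspace_0[OF V]
      by (simp add: vs.representation_zero)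
  next
    fix x y assume x: "x \<in> I c" and y: "y \<in> I c"
    then have xV: "x \<in> V" and yV: "y \<in> V" unfolding I_def by auto
    show "x + y \<in> I c" using x y unfolding I_def R_def
      by (auto simp: vs.representation_add[OF B(3) spanV[OF yV] spanV[OF xV]]
          vs.subspace_add[OF V] sum.distrib distrib_left)
  next
    fix a x assume x: "x \<in> I c"
    then have xV: "x \<in> V" unfolding I_def by auto
    show "scale a x \<in> I c" using x unfolding I_def R_def
      by (auto simp: vs.representation_scale[OF B(3) spanV[OF xV]] vs.subspace_scale[OF V]
          sum_distrib_left mult.left_commute)
  next
    fix a x assume x: "x \<in> I c"
    then have xV: "x \<in> V" unfolding I_def by auto
    have aW: "a * x \<in> W" using mul xV .
    have "\<forall>v\<in>Y. R (a * x) v = (\<Sum>u\<in>U. c u v * R (a * x) u)"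
      using R0[OF aW] U(1) Y_def by (auto intro!: sum.neutral simp: subset_iff)
    then show "a * x \<in> I c" unfolding I_def using WV aW by auto
  qed
  have key: "c u0 v0 = d u0 v0" if eq: "I c = I d" and u0: "u0 \<in> U" and v0: "v0 \<in> Y" for c d u0 v0
  proof -
    define x where "x = u0 + (\<Sum>v\<in>Y. scale (c u0 v) v)"
    have u0B: "u0 \<in> B" and YB: "Y \<subseteq> B" using u0 U D_def Y_def by auto
    have s1: "u0 \<in> vs.span B" using u0B vs.span_base by auto
    have s2: "(\<Sum>v\<in>Y. scale (c u0 v) v) \<in> vs.span B"
      by (intro vs.span_sum vs.span_scale vs.span_base) (use YB in auto)
    have Rb: "R v = (\<lambda>b. if b = v then 1 else 0)" if "v \<in> B" for v
      unfolding R_def by (rule vs.representation_basis[OF B(3) that])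
    have "R (\<Sum>v\<in>Y. scale (c u0 v) v) = (\<lambda>b. \<Sum>v\<in>Y. R (scale (c u0 v) v) b)"
      unfolding R_def by (rule vs.representation_sum[OF B(3)]) (use YB vs.span_scale vs.span_base in blast)
    also have "\<dots> = (\<lambda>b. \<Sum>v\<in>Y. c u0 v * (if b = v then 1 else 0))"
    proof (intro ext sum.cong refl)
      fix b v assume v: "v \<in> Y"
      have "R (scale (c u0 v) v) = (\<lambda>b. c u0 v * R v b)" unfolding R_def
        by (rule vs.representation_scale[OF B(3)]) (use v YB vs.span_base in blast)
      then show "R (scale (c u0 v) v) b = c u0 v * (if b = v then 1 else 0)"
        using Rb[of v] v YB by auto
    qed
    finally have Rs: "R (\<Sum>v\<in>Y. scale (c u0 v) v) b = (if b \<in> Y then c u0 b else 0)" for b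
      using finY by (simp add: if_distrib[of "\<lambda>z. c u0 _ * z"] sum.delta' cong: if_cong)
    have Rx: "R x b = (if b = u0 then 1 else 0) + (if b \<in> Y then c u0 b else 0)" for b
      unfolding x_def using vs.representation_add[OF B(3) s2 s1] Rs Rb[OF u0B] unfolding R_def by simp
    have u0Y: "u0 \<notin> Y" using u0 Y_def by auto
    have xV: "x \<in> V" unfolding x_def
      by (intro vs.subspace_add[OF V] vs.subspace_sum[OF V] vs.subspace_scale[OF V])
         (use u0B YB B(2) in auto)
    have sumU: "(\<Sum>u\<in>U. e u v * R x u) = e u0 v" for e :: "'a \<Rightarrow> 'a \<Rightarrow> 'k" and v
    proof -
      have "(\<Sum>u\<in>U. e u v * R x u) = (\<Sum>u\<in>U. if u = u0 then e u v else 0)"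
        by (intro sum.cong refl) (auto simp: Rx Y_def)
      also have "\<dots> = e u0 v" using finU u0 by (simp add: sum.delta')
      finally show ?thesis .
    qed
    have "\<forall>v\<in>Y. R x v = (\<Sum>u\<in>U. c u v * R x u)"
    proof
      fix v assume v: "v \<in> Y"
      have "R x v = c u0 v" using Rx[of v] v u0Y by auto
      then show "R x v = (\<Sum>u\<in>U. c u v * R x u)" by (simp only: sumU)
    qed
    then have "x \<in> I c" unfolding I_def using xV by auto
    then have "x \<in> I d" using eq by simp
    then have "R x v0 = d u0 v0" unfolding I_def using v0 sumU by auto
    moreover have "R x v0 = c u0 v0" using Rx v0 u0Y by auto
    ultimately show ?thesis by simp
  qed
  define P where "P = PiE U (\<lambda>_. PiE Y (\<lambda>_. UNIV :: 'k set))"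
  have inj: "inj_on I P"
  proof (rule inj_onI)
    fix c d assume c: "c \<in> P" and d: "d \<in> P" and eq: "I c = I d"
    show "c = d"
    proof (rule ext)
      fix u show "c u = d u"
      proof (cases "u \<in> U")
        case True
        then have cu: "c u \<in> PiE Y (\<lambda>_. UNIV :: 'k set)" and du: "d u \<in> PiE Y (\<lambda>_. UNIV :: 'k set)"
          using c d unfolding P_def by auto
        show ?thesis
        proof (rule ext)
          fix v show "c u v = d u v"
            using key[OF eq True, of v] PiE_arb[OF cu, of v] PiE_arb[OF du, of v] by (cases "v \<in> Y") auto
        qed
      next
        case False then show ?thesis using PiE_arb[of c U _ u] PiE_arb[of d U _ u] c d
          unfolding P_def by auto
      qed
    qed
  qed
  have cP: "card P = p ^ (t\<^sup>2 div 4)"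
  proof -
    have "card P = (\<Prod>u\<in>U. \<Prod>v\<in>Y. card (UNIV :: 'k set))"
      unfolding P_def using finU finY by (simp add: card_PiE)
    also have "\<dots> = (p ^ card Y) ^ card U" using fK by simp
    also have "\<dots> = p ^ (card U * card Y)" by (simp add: power_mult[symmetric] mult.commute)
    finally show ?thesis using U cY div4 by simp
  qed
  have sub: "I ` P \<subseteq> {I. alg_ideal scale I}" using ideal by auto
  have fin: "finite {I. alg_ideal scale I}"
    by (rule finite_subset[OF _ finite_Pow_iff[THEN iffD2, OF fA]]) auto
  have "card (I ` P) = card P" by (rule card_image[OF inj])
  then show ?thesis using card_mono[OF fin sub] cP t_def by simp
qed

theorem mainTheorem14:
  fixes scale :: "'k::field \<Rightarrow> 'a::comm_ring \<Rightarrow> 'a"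
    and p e :: nat
  assumes "prime p"
    and "card (UNIV :: 'k set) = p"
    and "comm_algebra scale"
    and "\<exists>B. finite B \<and> module.span scale B = UNIV"
    and "\<exists>x::'a. x \<noteq> 0"
    and "alg_pow scale e \<noteq> {0}"
    and "alg_pow scale (e + 1) = {0}"
  shows "card {I. alg_ideal scale I}
           \<ge> p ^ ((Max {quot_dim scale (annN r) (annN (r - 1)) | r. 1 \<le> r \<and> r \<le> e})\<^sup>2 div 4)"
proof -
  have vs: "vector_space scale" using assms(3) comm_algebra_def by blast
  interpret vs: vector_space scale by (rule vs)
  have fK: "finite (UNIV::'k set)"
    using assms(1,2) card_ge_0_finite prime_gt_0_nat by metis
  obtain B0 where B0: "finite B0" "vs.span B0 = UNIV" using assms(4) by blast
  have fA: "finite (UNIV :: 'a set)" by (rule finite_space[OF vs fK B0])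
  have e1: "1 \<le> e"
  proof (rule ccontr)
    assume "\<not> 1 \<le> e"
    then have "e = 0" by simp
    then have "alg_pow scale e = {0}" unfolding alg_pow_def by simp
    with assms(6) show False by simp
  qed
  define S where "S = {quot_dim scale (annN r) (annN (r - 1)) | r. 1 \<le> r \<and> r \<le> e}"
  have S: "S = (\<lambda>r. quot_dim scale (annN r) (annN (r - 1))) ` {1..e}"
    unfolding S_def by auto
  have "Max S \<in> S" by (rule Max_in) (use S e1 in auto)
  then obtain r where r: "1 \<le> r" "Max S = quot_dim scale (annN r) (annN (r - 1))"
    unfolding S_def by auto
  have "p ^ ((vs.dim (annN r) - vs.dim (annN (r - 1)))\<^sup>2 div 4) \<le> card {I. alg_ideal scale I}"
    by (rule many_ideals[OF vs assms(2) fA annN_subspace[OF assms(3)] annN_mono[OF r(1)]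
          annN_mult[OF r(1)]])
  then have "p ^ ((Max S)\<^sup>2 div 4) \<le> card {I. alg_ideal scale I}"
    using r(2) unfolding quot_dim_def by simp
  then show ?thesis unfolding S_def .
qed

end
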